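(* Let $\lambda_j\ge 0$ ($j=1,\dots,k$), not all zero, and $\gamma_i>0$ ($i=1,\dots,n$). Let $(\{\hat\theta'_i\}_{i=1}^n,\{\hat w_j\}_{j=1}^k,\hat{\bar w})$ be a minimizer of $$F_{MTL}(\{\theta_i\},\{w_j\},\bar w)=\sum_{j=1}^k\Big(\sum_{i\in\mathcal I_j}\Big(f_i(\theta_i)+\frac{\gamma_i}{2}\|\theta_i-w_j\|^2\Big)+\frac{\lambda_j}{2}\|w_j-\bar w\|^2\Big)$$ over $\theta_i\in\mathbb R^d$, $w_j\in\mathbb R^d$, $\bar w\in\mathbb R^d$. Set $\alpha_j=\frac{\lambda_j}{\lambda_j+\sum_{i\in\mathcal I_j}\gamma_i}$ for $j=1,\dots,k$, and let $\{\hat\theta_i\}_{i=1}^n$ be the unique minimizer of the objective $F$ (defined in the context) with these $\alpha_j$ and $\gamma_i$. Then $\hat\theta_i=\hat\theta'_i$ for all $i=1,\dots,n$.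
   Context: Clients $1,\dots,n$ are partitioned into nonempty disjoint clusters $\mathcal I_1,\dots,\mathcal I_k$; $d\ge1$. Each $f_i:\mathbb R^d\to\mathbb R$ is differentiable, $\mu$-strongly convex and $L$-smooth ($0<\mu\le L$). Given weights $\gamma_i>0$ and $\alpha_j\in[0,1]$ (not all $\alpha_j=0$), for $\Theta=(\theta_1,\dots,\theta_n)$ define $\bar\theta_j=\frac{\sum_{i\in\mathcal I_j}\gamma_i\theta_i}{\sum_{i\in\mathcal I_j}\gamma_i}$, $\bar\theta=\frac{\sum_{j=1}^k\sum_{i\in\mathcal I_j}\alpha_j\gamma_i\theta_i}{\sum_{j=1}^k\sum_{i\in\mathcal I_j}\alpha_j\gamma_i}$, and $$F(\Theta)=\sum_{j=1}^k\sum_{i\in\mathcal I_j}\Big(f_i(\theta_i)+\frac{(1-\alpha_j)\gamma_i}{2}\|\theta_i-\bar\theta_j\|^2+\frac{\alpha_j\gamma_i}{2}\|\theta_i-\bar\theta\|^2\Big).$$ *)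

theory Defs
  imports "HOL-Analysis.Analysis"
begin

definition strongly_convex :: "real \<Rightarrow> ('a::real_normed_vector \<Rightarrow> real) \<Rightarrow> bool" where
  "strongly_convex \<mu> f \<longleftrightarrow>
     (\<forall>x y t. 0 \<le> t \<and> t \<le> 1 \<longrightarrow>
        f (t *\<^sub>R x + (1 - t) *\<^sub>R y)
          \<le> t * f x + (1 - t) * f y - \<mu> / 2 * t * (1 - t) * (norm (x - y))\<^sup>2)"

definition L_smooth :: "real \<Rightarrow> ('a::real_inner \<Rightarrow> real) \<Rightarrow> bool" where
  "L_smooth L f \<longleftrightarrow>
     (\<exists>g. (\<forall>x. (f has_derivative (\<lambda>h. g x \<bullet> h)) (at x)) \<and>
          (\<forall>x y. norm (g x - g y) \<le> L * norm (x - y)))"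

text \<open>Clients are 0..<n, clusters are indexed 0..<k, cluster j is the set I j.\<close>

definition cluster_mean ::
  "(nat \<Rightarrow> nat set) \<Rightarrow> (nat \<Rightarrow> real) \<Rightarrow> (nat \<Rightarrow> 'a::real_vector) \<Rightarrow> nat \<Rightarrow> 'a" where
  "cluster_mean I \<gamma> \<Theta> j = (\<Sum>i\<in>I j. \<gamma> i *\<^sub>R \<Theta> i) /\<^sub>R (\<Sum>i\<in>I j. \<gamma> i)"

definition global_mean ::
  "nat \<Rightarrow> (nat \<Rightarrow> nat set) \<Rightarrow> (nat \<Rightarrow> real) \<Rightarrow> (nat \<Rightarrow> real) \<Rightarrow> (nat \<Rightarrow> 'a::real_vector) \<Rightarrow> 'a" where
  "global_mean k I \<alpha> \<gamma> \<Theta> =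
     (\<Sum>j<k. \<Sum>i\<in>I j. (\<alpha> j * \<gamma> i) *\<^sub>R \<Theta> i) /\<^sub>R (\<Sum>j<k. \<Sum>i\<in>I j. \<alpha> j * \<gamma> i)"

definition F_obj ::
  "nat \<Rightarrow> (nat \<Rightarrow> nat set) \<Rightarrow> (nat \<Rightarrow> 'a::real_normed_vector \<Rightarrow> real) \<Rightarrow> (nat \<Rightarrow> real) \<Rightarrow> (nat \<Rightarrow> real)
   \<Rightarrow> (nat \<Rightarrow> 'a) \<Rightarrow> real" where
  "F_obj k I f \<alpha> \<gamma> \<Theta> =
     (\<Sum>j<k. \<Sum>i\<in>I j.
        f i (\<Theta> i)
        + (1 - \<alpha> j) * \<gamma> i / 2 * (norm (\<Theta> i - cluster_mean I \<gamma> \<Theta> j))\<^sup>2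
        + \<alpha> j * \<gamma> i / 2 * (norm (\<Theta> i - global_mean k I \<alpha> \<gamma> \<Theta>))\<^sup>2)"

definition F_MTL ::
  "nat \<Rightarrow> (nat \<Rightarrow> nat set) \<Rightarrow> (nat \<Rightarrow> 'a::real_normed_vector \<Rightarrow> real) \<Rightarrow> (nat \<Rightarrow> real) \<Rightarrow> (nat \<Rightarrow> real)
   \<Rightarrow> (nat \<Rightarrow> 'a) \<Rightarrow> (nat \<Rightarrow> 'a) \<Rightarrow> 'a \<Rightarrow> real" where
  "F_MTL k I f lam \<gamma> \<theta> w wbar =
     (\<Sum>j<k. (\<Sum>i\<in>I j. f i (\<theta> i) + \<gamma> i / 2 * (norm (\<theta> i - w j))\<^sup>2)
            + lam j / 2 * (norm (w j - wbar))\<^sup>2)"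

end

theory Submission
  imports Defs
begin


lemma var_decomp:
  fixes x :: "nat \<Rightarrow> 'a::real_inner"
  assumes fin: "finite S" and nz: "sum a S \<noteq> 0"
  shows "(\<Sum>i\<in>S. a i * (norm (x i - y))\<^sup>2) =
    (\<Sum>i\<in>S. a i * (norm (x i - (\<Sum>i\<in>S. a i *\<^sub>R x i) /\<^sub>R sum a S))\<^sup>2)
    + sum a S * (norm ((\<Sum>i\<in>S. a i *\<^sub>R x i) /\<^sub>R sum a S - y))\<^sup>2"
proof -
  define m where "m = (\<Sum>i\<in>S. a i *\<^sub>R x i) /\<^sub>R sum a S"
  have sm: "sum a S *\<^sub>R m = (\<Sum>i\<in>S. a i *\<^sub>R x i)" using nz by (simp add: m_def)
  have hm: "(\<Sum>i\<in>S. a i *\<^sub>R (x i - m)) = 0"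
    by (simp add: scaleR_diff_right sum_subtractf scaleR_sum_left[symmetric] sm)
  have e: "(norm (x i - y))\<^sup>2 = (norm (x i - m))\<^sup>2 + 2*((x i - m) \<bullet> (m - y)) + (norm (m - y))\<^sup>2" for i
  proof -
    have g: "(norm (u + w))\<^sup>2 = (norm u)\<^sup>2 + 2*(u \<bullet> w) + (norm w)\<^sup>2" for u w :: 'a
      by (simp add: power2_norm_eq_inner inner_add_left inner_add_right inner_commute)
    have "x i - y = (x i - m) + (m - y)" by simp
    then show ?thesis using g[of "x i - m" "m - y"] by metis
  qed
  have "(\<Sum>i\<in>S. a i * (norm (x i - y))\<^sup>2) =
     (\<Sum>i\<in>S. a i * (norm (x i - m))\<^sup>2) + 2 * ((\<Sum>i\<in>S. a i *\<^sub>R (x i - m)) \<bullet> (m - y)) + sum a S * (norm (m - y))\<^sup>2"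
    by (simp add: e distrib_left sum.distrib sum_distrib_left sum_distrib_right inner_sum_left mult.assoc mult.left_commute)
  also have "\<dots> = (\<Sum>i\<in>S. a i * (norm (x i - m))\<^sup>2) + sum a S * (norm (m - y))\<^sup>2"
    by (simp add: hm)
  finally show ?thesis by (simp add: m_def)
qed

lemma two_point:
  fixes m v b :: "'a::real_normed_vector"
  assumes G: "0 < G" and l: "0 \<le> l"
  shows "(l / (l + G) * G) * (norm (m - b))\<^sup>2 \<le> G * (norm (m - v))\<^sup>2 + l * (norm (v - b))\<^sup>2"
proof -
  define a where "a = norm (m - v)"
  define d where "d = norm (v - b)"
  have tri: "norm (m - b) \<le> a + d" unfolding a_def d_def by (metis norm_triangle_ineq diff_add_cancel add_diff_eq)
  have c0: "0 \<le> l / (l + G) * G" using G l by simp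
  have "(l / (l + G) * G) * (norm (m - b))\<^sup>2 \<le> (l / (l + G) * G) * (a + d)\<^sup>2"
    using tri c0 by (intro mult_left_mono power_mono) auto
  also have "\<dots> \<le> G * a\<^sup>2 + l * d\<^sup>2"
  proof -
    have s: "0 < l + G" using G l by simp
    have "l * G * (a + d)\<^sup>2 \<le> (l + G) * (G * a\<^sup>2 + l * d\<^sup>2)"
    proof -
      have "0 \<le> (G*a - l*d)\<^sup>2" by simp
      then show ?thesis by (simp add: power2_eq_square algebra_simps)
    qed
    then show ?thesis using s by (simp add: field_simps)
  qed
  finally show ?thesis by (simp add: a_def d_def)
qed

lemma two_point_eq:
  fixes m b :: "'a::real_normed_vector"
  assumes G: "0 < G" and l: "0 \<le> l"
  shows "G * (norm (m - ((G/(l+G)) *\<^sub>R m + (l/(l+G)) *\<^sub>R b)))\<^sup>2 + l * (norm (((G/(l+G)) *\<^sub>R m + (l/(l+G)) *\<^sub>R b) - b))\<^sup>2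
     = (l / (l + G) * G) * (norm (m - b))\<^sup>2"
proof -
  have s: "0 < l + G" using G l by simp
  define A where "A = G/(l+G)"
  define B where "B = l/(l+G)"
  have one: "A + B = 1" using s unfolding A_def B_def by (simp add: add_divide_distrib[symmetric])
  have m_split: "m = A *\<^sub>R m + B *\<^sub>R m" by (metis one scaleR_add_left scaleR_one)
  have e1: "m - (A *\<^sub>R m + B *\<^sub>R b) = B *\<^sub>R (m - b)"
  proof -
    have "m - (A *\<^sub>R m + B *\<^sub>R b) = (A *\<^sub>R m + B *\<^sub>R m) - (A *\<^sub>R m + B *\<^sub>R b)"
      by (rule arg_cong[where f="\<lambda>x. x - (A *\<^sub>R m + B *\<^sub>R b)", OF m_split])
    also have "\<dots> = B *\<^sub>R (m - b)" by (simp add: scaleR_diff_right)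
    finally show ?thesis .
  qed
  have e2: "(A *\<^sub>R m + B *\<^sub>R b) - b = A *\<^sub>R (m - b)"
  proof -
    have b_split: "b = A *\<^sub>R b + B *\<^sub>R b" by (metis one scaleR_add_left scaleR_one)
    have "(A *\<^sub>R m + B *\<^sub>R b) - b = (A *\<^sub>R m + B *\<^sub>R b) - (A *\<^sub>R b + B *\<^sub>R b)"
      by (rule arg_cong[where f="\<lambda>x. (A *\<^sub>R m + B *\<^sub>R b) - x", OF b_split])
    also have "\<dots> = A *\<^sub>R (m - b)" by (simp add: scaleR_diff_right)
    finally show ?thesis .
  qed
  have nn: "(norm (B *\<^sub>R (m - b)))\<^sup>2 = B\<^sup>2 * (norm (m - b))\<^sup>2" "(norm (A *\<^sub>R (m - b)))\<^sup>2 = A\<^sup>2 * (norm (m - b))\<^sup>2"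
    by (simp_all add: power_mult_distrib)
  have Bs: "B*(l+G) = l" and As: "A*(l+G) = G" using s by (simp_all add: A_def B_def)
  have "(l+G)*(G*B\<^sup>2 + l*A\<^sup>2) = G*B*(B*(l+G)) + l*A*(A*(l+G))" by (simp add: power2_eq_square algebra_simps)
  also have "\<dots> = l*G*(A+B)" unfolding Bs As by (simp add: algebra_simps)
  finally have "(l+G)*(G*B\<^sup>2 + l*A\<^sup>2) = l*G" using one by simp
  then have "G * B\<^sup>2 + l * A\<^sup>2 = l*G/(l+G)" using s by (simp add: eq_divide_eq mult.commute)
  then have h: "G * B\<^sup>2 + l * A\<^sup>2 = l / (l + G) * G" by simp
  have "G * (B\<^sup>2 * (norm (m - b))\<^sup>2) + l * (A\<^sup>2 * (norm (m - b))\<^sup>2) = (G * B\<^sup>2 + l * A\<^sup>2) * (norm (m - b))\<^sup>2"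
    by (simp add: algebra_simps)
  also have "\<dots> = (l / (l + G) * G) * (norm (m - b))\<^sup>2" by (simp only: h)
  finally have fin: "G * (B\<^sup>2 * (norm (m - b))\<^sup>2) + l * (A\<^sup>2 * (norm (m - b))\<^sup>2) = (l / (l + G) * G) * (norm (m - b))\<^sup>2" .
  have "G * (norm (m - (A *\<^sub>R m + B *\<^sub>R b)))\<^sup>2 + l * (norm ((A *\<^sub>R m + B *\<^sub>R b) - b))\<^sup>2 = (l / (l + G) * G) * (norm (m - b))\<^sup>2"
    unfolding e1 e2 nn by (rule fin)
  then show ?thesis unfolding A_def B_def .
qed

lemma cluster_obj:
  fixes \<theta> :: "nat \<Rightarrow> 'a::real_inner"
  assumes fin: "finite S" and Gp: "0 < sum \<gamma> S"
  shows "(\<Sum>i\<in>S. f i (\<theta> i) + (1 - al) * \<gamma> i / 2 * (norm (\<theta> i - (\<Sum>i\<in>S. \<gamma> i *\<^sub>R \<theta> i) /\<^sub>R sum \<gamma> S))\<^sup>2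
        + al * \<gamma> i / 2 * (norm (\<theta> i - g))\<^sup>2)
   = (\<Sum>i\<in>S. f i (\<theta> i)) + 1/2 * (\<Sum>i\<in>S. \<gamma> i * (norm (\<theta> i - (\<Sum>i\<in>S. \<gamma> i *\<^sub>R \<theta> i) /\<^sub>R sum \<gamma> S))\<^sup>2)
     + 1/2 * (al * sum \<gamma> S) * (norm ((\<Sum>i\<in>S. \<gamma> i *\<^sub>R \<theta> i) /\<^sub>R sum \<gamma> S - g))\<^sup>2"
proof -
  define cm where "cm = (\<Sum>i\<in>S. \<gamma> i *\<^sub>R \<theta> i) /\<^sub>R sum \<gamma> S"
  have vd: "(\<Sum>i\<in>S. \<gamma> i * (norm (\<theta> i - g))\<^sup>2) = (\<Sum>i\<in>S. \<gamma> i * (norm (\<theta> i - cm))\<^sup>2) + sum \<gamma> S * (norm (cm - g))\<^sup>2"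
    unfolding cm_def using var_decomp[OF fin, of \<gamma> \<theta> g] Gp by simp
  have "(\<Sum>i\<in>S. f i (\<theta> i) + (1 - al) * \<gamma> i / 2 * (norm (\<theta> i - cm))\<^sup>2 + al * \<gamma> i / 2 * (norm (\<theta> i - g))\<^sup>2)
     = (\<Sum>i\<in>S. f i (\<theta> i)) + (1 - al)/2 * (\<Sum>i\<in>S. \<gamma> i * (norm (\<theta> i - cm))\<^sup>2) + al/2 * (\<Sum>i\<in>S. \<gamma> i * (norm (\<theta> i - g))\<^sup>2)"
    by (simp add: sum.distrib sum_distrib_left mult.assoc)
  also have "\<dots> = (\<Sum>i\<in>S. f i (\<theta> i)) + 1/2 * (\<Sum>i\<in>S. \<gamma> i * (norm (\<theta> i - cm))\<^sup>2) + 1/2 * (al * sum \<gamma> S) * (norm (cm - g))\<^sup>2"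
    unfolding vd by (simp add: field_simps)
  finally show ?thesis unfolding cm_def .
qed

lemma cluster_mtl:
  fixes \<theta> :: "nat \<Rightarrow> 'a::real_inner"
  assumes fin: "finite S" and Gp: "0 < sum \<gamma> S"
  shows "(\<Sum>i\<in>S. f i (\<theta> i) + \<gamma> i / 2 * (norm (\<theta> i - v))\<^sup>2)
   = (\<Sum>i\<in>S. f i (\<theta> i)) + 1/2 * (\<Sum>i\<in>S. \<gamma> i * (norm (\<theta> i - (\<Sum>i\<in>S. \<gamma> i *\<^sub>R \<theta> i) /\<^sub>R sum \<gamma> S))\<^sup>2)
     + 1/2 * sum \<gamma> S * (norm ((\<Sum>i\<in>S. \<gamma> i *\<^sub>R \<theta> i) /\<^sub>R sum \<gamma> S - v))\<^sup>2"
proof -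
  have vd: "(\<Sum>i\<in>S. \<gamma> i * (norm (\<theta> i - v))\<^sup>2) = (\<Sum>i\<in>S. \<gamma> i * (norm (\<theta> i - (\<Sum>i\<in>S. \<gamma> i *\<^sub>R \<theta> i) /\<^sub>R sum \<gamma> S))\<^sup>2) + sum \<gamma> S * (norm ((\<Sum>i\<in>S. \<gamma> i *\<^sub>R \<theta> i) /\<^sub>R sum \<gamma> S - v))\<^sup>2"
    using var_decomp[OF fin, of \<gamma> \<theta> v] Gp by simp
  have "(\<Sum>i\<in>S. f i (\<theta> i) + \<gamma> i / 2 * (norm (\<theta> i - v))\<^sup>2) = (\<Sum>i\<in>S. f i (\<theta> i)) + 1/2 * (\<Sum>i\<in>S. \<gamma> i * (norm (\<theta> i - v))\<^sup>2)"
    by (simp add: sum.distrib sum_distrib_left)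
  then show ?thesis unfolding vd by (simp add: algebra_simps)
qed

lemma global_mean_eq:
  fixes \<theta> :: "nat \<Rightarrow> 'a::real_inner"
  assumes Gp: "\<And>j. j < k \<Longrightarrow> 0 < sum \<gamma> (I j)"
  shows "global_mean k I \<alpha> \<gamma> \<theta> = (\<Sum>j<k. (\<alpha> j * sum \<gamma> (I j)) *\<^sub>R cluster_mean I \<gamma> \<theta> j) /\<^sub>R (\<Sum>j<k. \<alpha> j * sum \<gamma> (I j))"
proof -
  have n: "(\<Sum>i\<in>I j. (\<alpha> j * \<gamma> i) *\<^sub>R \<theta> i) = (\<alpha> j * sum \<gamma> (I j)) *\<^sub>R cluster_mean I \<gamma> \<theta> j" if "j < k" for j
  proof -
    have "(\<Sum>i\<in>I j. (\<alpha> j * \<gamma> i) *\<^sub>R \<theta> i) = \<alpha> j *\<^sub>R (\<Sum>i\<in>I j. \<gamma> i *\<^sub>R \<theta> i)"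
      by (simp add: scaleR_sum_right)
    also have "\<dots> = (\<alpha> j * sum \<gamma> (I j)) *\<^sub>R cluster_mean I \<gamma> \<theta> j"
      using Gp[OF that] by (simp add: cluster_mean_def)
    finally show ?thesis .
  qed
  have d: "(\<Sum>i\<in>I j. \<alpha> j * \<gamma> i) = \<alpha> j * sum \<gamma> (I j)" for j by (simp add: sum_distrib_left)
  show ?thesis unfolding global_mean_def d using n by simp
qed

lemma obj_vs_mtl:
  fixes \<theta> :: "nat \<Rightarrow> 'a::real_inner"
  assumes fin: "\<And>j. j<k \<Longrightarrow> finite (I j)" and Gp: "\<And>j. j<k \<Longrightarrow> 0 < sum \<gamma> (I j)"
    and ln: "\<And>j. j<k \<Longrightarrow> 0 \<le> lam j"
    and Cp: "0 < (\<Sum>j<k. lam j / (lam j + sum \<gamma> (I j)) * sum \<gamma> (I j))"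
  shows "F_obj k I f (\<lambda>j. lam j / (lam j + sum \<gamma> (I j))) \<gamma> \<theta> \<le> F_MTL k I f lam \<gamma> \<theta> v b"
    and "\<exists>v b. F_MTL k I f lam \<gamma> \<theta> v b = F_obj k I f (\<lambda>j. lam j / (lam j + sum \<gamma> (I j))) \<gamma> \<theta>"
proof -
  define \<alpha> where "\<alpha> = (\<lambda>j. lam j / (lam j + sum \<gamma> (I j)))"
  define cm where "cm = (\<lambda>j. cluster_mean I \<gamma> \<theta> j)"
  define c where "c = (\<lambda>j. \<alpha> j * sum \<gamma> (I j))"
  define P where "P = (\<lambda>j. (\<Sum>i\<in>I j. f i (\<theta> i)) + 1/2 * (\<Sum>i\<in>I j. \<gamma> i * (norm (\<theta> i - cm j))\<^sup>2))"
  define g where "g = global_mean k I \<alpha> \<gamma> \<theta>"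
  have Cp': "0 < sum c {..<k}" using Cp by (simp add: c_def \<alpha>_def)
  have gdef: "g = (\<Sum>j<k. c j *\<^sub>R cm j) /\<^sub>R sum c {..<k}"
    unfolding g_def c_def cm_def using global_mean_eq[of k \<gamma> I \<alpha> \<theta>] Gp by simp
  have Q: "(\<Sum>j<k. c j * (norm (cm j - b'))\<^sup>2) = (\<Sum>j<k. c j * (norm (cm j - g))\<^sup>2) + sum c {..<k} * (norm (g - b'))\<^sup>2" for b'
    unfolding gdef using var_decomp[of "{..<k}" c cm b'] Cp' by simp
  have obj: "F_obj k I f \<alpha> \<gamma> \<theta> = (\<Sum>j<k. P j + 1/2 * c j * (norm (cm j - g))\<^sup>2)"
    unfolding F_obj_def
  proof (rule sum.cong[OF refl])
    fix j assume "j \<in> {..<k}"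
    then have j: "j < k" by simp
    show "(\<Sum>i\<in>I j. f i (\<theta> i) + (1 - \<alpha> j) * \<gamma> i / 2 * (norm (\<theta> i - cluster_mean I \<gamma> \<theta> j))\<^sup>2 +
          \<alpha> j * \<gamma> i / 2 * (norm (\<theta> i - global_mean k I \<alpha> \<gamma> \<theta>))\<^sup>2) = P j + 1/2 * c j * (norm (cm j - g))\<^sup>2"
      using cluster_obj[OF fin[OF j] Gp[OF j], of f \<theta> "\<alpha> j" g]
      unfolding P_def c_def cm_def g_def cluster_mean_def by simp
  qed
  have mtl: "F_MTL k I f lam \<gamma> \<theta> v' b' = (\<Sum>j<k. P j + 1/2 * (sum \<gamma> (I j) * (norm (cm j - v' j))\<^sup>2 + lam j * (norm (v' j - b'))\<^sup>2))" for v' b'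
    unfolding F_MTL_def
  proof (rule sum.cong[OF refl])
    fix j assume "j \<in> {..<k}"
    then have j: "j < k" by simp
    show "(\<Sum>i\<in>I j. f i (\<theta> i) + \<gamma> i / 2 * (norm (\<theta> i - v' j))\<^sup>2) + lam j / 2 * (norm (v' j - b'))\<^sup>2 =
      P j + 1/2 * (sum \<gamma> (I j) * (norm (cm j - v' j))\<^sup>2 + lam j * (norm (v' j - b'))\<^sup>2)"
      using cluster_mtl[OF fin[OF j] Gp[OF j], of f \<theta> "v' j"]
      unfolding P_def cm_def cluster_mean_def by (simp add: algebra_simps)
  qed
  have sumPQ: "(\<Sum>j<k. P j + 1/2 * c j * (norm (cm j - b'))\<^sup>2) = sum P {..<k} + 1/2 * (\<Sum>j<k. c j * (norm (cm j - b'))\<^sup>2)" for b'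
    by (simp add: sum.distrib sum_distrib_left mult.assoc)
  have "F_MTL k I f lam \<gamma> \<theta> v b \<ge> (\<Sum>j<k. P j + 1/2 * c j * (norm (cm j - b))\<^sup>2)"
    unfolding mtl
  proof (rule sum_mono)
    fix j assume "j \<in> {..<k}"
    then have j: "j < k" by simp
    show "P j + 1/2 * c j * (norm (cm j - b))\<^sup>2 \<le> P j + 1/2 * (sum \<gamma> (I j) * (norm (cm j - v j))\<^sup>2 + lam j * (norm (v j - b))\<^sup>2)"
    proof -
      have h2: "1/2 * (c j * (norm (cm j - b))\<^sup>2) \<le> 1/2 * (sum \<gamma> (I j) * (norm (cm j - v j))\<^sup>2 + lam j * (norm (v j - b))\<^sup>2)"
        using two_point[OF Gp[OF j] ln[OF j], of "cm j" b "v j"] unfolding c_def \<alpha>_def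
        by (intro mult_left_mono) auto
      show ?thesis using add_left_mono[OF h2, of "P j"] by (simp add: mult.assoc)
    qed
  qed
  moreover have "(\<Sum>j<k. P j + 1/2 * c j * (norm (cm j - b))\<^sup>2) \<ge> (\<Sum>j<k. P j + 1/2 * c j * (norm (cm j - g))\<^sup>2)"
  proof -
    have "0 \<le> sum c {..<k} * (norm (g - b))\<^sup>2" using Cp' by simp
    then show ?thesis by (simp only: sumPQ Q[of b] distrib_left)
  qed
  ultimately have "F_obj k I f \<alpha> \<gamma> \<theta> \<le> F_MTL k I f lam \<gamma> \<theta> v b"
    unfolding obj by (rule order_trans[rotated])
  then show "F_obj k I f (\<lambda>j. lam j / (lam j + sum \<gamma> (I j))) \<gamma> \<theta> \<le> F_MTL k I f lam \<gamma> \<theta> v b"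
    unfolding \<alpha>_def .
  define vs where "vs = (\<lambda>j. (sum \<gamma> (I j) / (lam j + sum \<gamma> (I j))) *\<^sub>R cm j + (lam j / (lam j + sum \<gamma> (I j))) *\<^sub>R g)"
  have "F_MTL k I f lam \<gamma> \<theta> vs g = (\<Sum>j<k. P j + 1/2 * c j * (norm (cm j - g))\<^sup>2)"
    unfolding mtl
  proof (rule sum.cong[OF refl])
    fix j assume "j \<in> {..<k}"
    then have j: "j < k" by simp
    have e: "sum \<gamma> (I j) * (norm (cm j - vs j))\<^sup>2 + lam j * (norm (vs j - g))\<^sup>2 = (lam j / (lam j + sum \<gamma> (I j)) * sum \<gamma> (I j)) * (norm (cm j - g))\<^sup>2"
      unfolding vs_def by (rule two_point_eq[OF Gp[OF j] ln[OF j]])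
    show "P j + 1/2 * (sum \<gamma> (I j) * (norm (cm j - vs j))\<^sup>2 + lam j * (norm (vs j - g))\<^sup>2) = P j + 1/2 * c j * (norm (cm j - g))\<^sup>2"
      unfolding e c_def \<alpha>_def by (simp only: mult.assoc)
  qed
  then have h: "F_MTL k I f lam \<gamma> \<theta> vs g = F_obj k I f \<alpha> \<gamma> \<theta>" unfolding obj .
  show "\<exists>v b. F_MTL k I f lam \<gamma> \<theta> v b = F_obj k I f (\<lambda>j. lam j / (lam j + sum \<gamma> (I j))) \<gamma> \<theta>"
  proof (intro exI)
    show "F_MTL k I f lam \<gamma> \<theta> vs g = F_obj k I f (\<lambda>j. lam j / (lam j + sum \<gamma> (I j))) \<gamma> \<theta>"
      using h unfolding \<alpha>_def .
  qed
qed

lemma sc_mid: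
  fixes f :: "'a::real_normed_vector \<Rightarrow> real"
  assumes "strongly_convex \<mu> f"
  shows "f ((1/2) *\<^sub>R (x + y)) \<le> 1/2 * f x + 1/2 * f y - \<mu>/8 * (norm (x - y))\<^sup>2"
proof -
  have "f ((1/2) *\<^sub>R x + (1 - 1/2) *\<^sub>R y) \<le> 1/2 * f x + (1 - 1/2) * f y - \<mu> / 2 * (1/2) * (1 - 1/2) * (norm (x - y))\<^sup>2"
  proof -
    have H: "\<forall>x y t. 0 \<le> t \<and> t \<le> 1 \<longrightarrow> f (t *\<^sub>R x + (1 - t) *\<^sub>R y)
          \<le> t * f x + (1 - t) * f y - \<mu> / 2 * t * (1 - t) * (norm (x - y))\<^sup>2"
      using assms unfolding strongly_convex_def .
    show ?thesis by (rule H[rule_format, where t="1/2" and x=x and y=y]) simp_all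
  qed
  moreover have "(1/2) *\<^sub>R (x + y) = (1/2) *\<^sub>R x + (1 - 1/2) *\<^sub>R y" by (simp add: scaleR_add_right)
  ultimately show ?thesis by simp
qed

lemma norm_mid:
  fixes a b c d :: "'a::real_inner"
  shows "(norm ((1/2) *\<^sub>R (a + b) - (1/2) *\<^sub>R (c + d)))\<^sup>2 \<le> 1/2 * (norm (a - c))\<^sup>2 + 1/2 * (norm (b - d))\<^sup>2"
proof -
  define u where "u = a - c"
  define v where "v = b - d"
  have e: "(1/2) *\<^sub>R (a + b) - (1/2) *\<^sub>R (c + d) = (1/2) *\<^sub>R (u + v)" unfolding u_def v_def by (simp add: algebra_simps)
  have p: "(norm (u + v))\<^sup>2 + (norm (u - v))\<^sup>2 = 2 * (norm u)\<^sup>2 + 2 * (norm v)\<^sup>2"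
    by (simp add: power2_norm_eq_inner inner_add_left inner_add_right inner_diff_left inner_diff_right inner_commute)
  have "(norm ((1/2) *\<^sub>R (u + v)))\<^sup>2 = 1/4 * (norm (u + v))\<^sup>2" by (simp add: power2_eq_square)
  moreover have "0 \<le> (norm (u - v))\<^sup>2" by simp
  ultimately show ?thesis unfolding e u_def[symmetric] v_def[symmetric] using p by linarith
qed

lemma sum_rearr:
  fixes a b c :: "nat \<Rightarrow> nat \<Rightarrow> real" and x y :: "nat \<Rightarrow> real"
  shows "(\<Sum>j<k. (\<Sum>i\<in>I j. 1/2 * a j i + 1/2 * b j i - c j i) + (1/2 * x j + 1/2 * y j))
    = 1/2 * (\<Sum>j<k. (\<Sum>i\<in>I j. a j i) + x j) + 1/2 * (\<Sum>j<k. (\<Sum>i\<in>I j. b j i) + y j) - (\<Sum>j<k. \<Sum>i\<in>I j. c j i)"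
  by (simp add: sum.distrib sum_subtractf sum_distrib_left sum_divide_distrib algebra_simps)

theorem proposition2p1:
  fixes n k :: nat
    and I :: "nat \<Rightarrow> nat set"
    and f :: "nat \<Rightarrow> 'a::euclidean_space \<Rightarrow> real"
    and \<mu> L :: real
    and \<gamma> lam :: "nat \<Rightarrow> real"
    and \<theta>' w :: "nat \<Rightarrow> 'a" and wbar :: 'a
    and \<theta>hat :: "nat \<Rightarrow> 'a"
  assumes clusters_nonempty: "\<And>j. j < k \<Longrightarrow> I j \<noteq> {}"
    and clusters_disjoint: "\<And>j j'. j < k \<Longrightarrow> j' < k \<Longrightarrow> j \<noteq> j' \<Longrightarrow> I j \<inter> I j' = {}"
    and clusters_cover: "(\<Union>j<k. I j) = {..<n}"
    and mu_pos: "0 < \<mu>" and mu_le_L: "\<mu> \<le> L"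
    and f_strongly_convex: "\<And>i. i < n \<Longrightarrow> strongly_convex \<mu> (f i)"
    and f_smooth: "\<And>i. i < n \<Longrightarrow> L_smooth L (f i)"
    and gamma_pos: "\<And>i. i < n \<Longrightarrow> 0 < \<gamma> i"
    and lambda_nonneg: "\<And>j. j < k \<Longrightarrow> 0 \<le> lam j"
    and lambda_not_all_zero: "\<exists>j<k. lam j \<noteq> 0"
    and MTL_min: "\<And>\<theta> v vbar. F_MTL k I f lam \<gamma> \<theta>' w wbar \<le> F_MTL k I f lam \<gamma> \<theta> v vbar"
    and F_min: "\<And>\<Theta>. F_obj k I f (\<lambda>j. lam j / (lam j + (\<Sum>i\<in>I j. \<gamma> i))) \<gamma> \<theta>hat
                      \<le> F_obj k I f (\<lambda>j. lam j / (lam j + (\<Sum>i\<in>I j. \<gamma> i))) \<gamma> \<Theta>"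
  shows "\<forall>i<n. \<theta>hat i = \<theta>' i"
  proof -
  have Isub: "\<And>j. j<k \<Longrightarrow> I j \<subseteq> {..<n}" using clusters_cover by blast
  have fin: "\<And>j. j<k \<Longrightarrow> finite (I j)" using Isub finite_subset by blast
  have Gp: "\<And>j. j<k \<Longrightarrow> 0 < sum \<gamma> (I j)"
  proof -
    fix j assume j: "j < k"
    show "0 < sum \<gamma> (I j)"
      by (rule sum_pos[OF fin[OF j] clusters_nonempty[OF j]]) (use Isub[OF j] gamma_pos in auto)
  qed
  obtain j0 where j0: "j0 < k" "lam j0 \<noteq> 0" using lambda_not_all_zero by blast
  have Cp: "0 < (\<Sum>j<k. lam j / (lam j + sum \<gamma> (I j)) * sum \<gamma> (I j))"
  proof (rule sum_pos2[of _ j0])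
    show "0 < lam j0 / (lam j0 + sum \<gamma> (I j0)) * sum \<gamma> (I j0)"
      using j0 lambda_nonneg[of j0] Gp[of j0] by simp
    show "0 \<le> lam j / (lam j + sum \<gamma> (I j)) * sum \<gamma> (I j)" if "j \<in> {..<k}" for j
      using that lambda_nonneg[of j] Gp[of j] by simp
  qed (use j0 in auto)
  note OM = obj_vs_mtl[of k I \<gamma> lam f, OF fin Gp lambda_nonneg Cp]
  obtain W B where WB: "F_MTL k I f lam \<gamma> \<theta>hat W B = F_obj k I f (\<lambda>j. lam j / (lam j + sum \<gamma> (I j))) \<gamma> \<theta>hat"
    using OM(2) by blast
  have F1: "F_obj k I f (\<lambda>j. lam j / (lam j + sum \<gamma> (I j))) \<gamma> \<theta>' \<le> F_MTL k I f lam \<gamma> \<theta>' w wbar"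
    by (rule OM(1))
  have eq: "F_MTL k I f lam \<gamma> \<theta>hat W B = F_MTL k I f lam \<gamma> \<theta>' w wbar"
    using WB F1 F_min[of \<theta>'] MTL_min[of \<theta>hat W B] by linarith
  define tm where "tm = (\<lambda>i. (1/2) *\<^sub>R (\<theta>' i + \<theta>hat i))"
  define vm where "vm = (\<lambda>j. (1/2) *\<^sub>R (w j + W j))"
  define bm where "bm = (1/2) *\<^sub>R (wbar + B)"
  define D where "D = (\<Sum>j<k. \<Sum>i\<in>I j. \<mu>/8 * (norm (\<theta>' i - \<theta>hat i))\<^sup>2)"
  have conv: "F_MTL k I f lam \<gamma> tm vm bm \<le> 1/2 * F_MTL k I f lam \<gamma> \<theta>' w wbar + 1/2 * F_MTL k I f lam \<gamma> \<theta>hat W B - D"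
  proof -
    have "F_MTL k I f lam \<gamma> tm vm bm \<le> (\<Sum>j<k. (\<Sum>i\<in>I j. 1/2 * (f i (\<theta>' i) + \<gamma> i / 2 * (norm (\<theta>' i - w j))\<^sup>2)
          + 1/2 * (f i (\<theta>hat i) + \<gamma> i / 2 * (norm (\<theta>hat i - W j))\<^sup>2) - \<mu>/8 * (norm (\<theta>' i - \<theta>hat i))\<^sup>2)
          + (1/2 * (lam j / 2 * (norm (w j - wbar))\<^sup>2) + 1/2 * (lam j / 2 * (norm (W j - B))\<^sup>2)))"
      unfolding F_MTL_def
    proof (rule sum_mono, rule add_mono, rule sum_mono)
      fix j i assume j: "j \<in> {..<k}" and i: "i \<in> I j"
      have "i < n" using Isub j i by auto
      have hf: "f i (tm i) \<le> 1/2 * f i (\<theta>' i) + 1/2 * f i (\<theta>hat i) - \<mu>/8 * (norm (\<theta>' i - \<theta>hat i))\<^sup>2"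
        unfolding tm_def by (rule sc_mid[OF f_strongly_convex[OF \<open>i < n\<close>]])
      have hn: "(norm (tm i - vm j))\<^sup>2 \<le> 1/2 * (norm (\<theta>' i - w j))\<^sup>2 + 1/2 * (norm (\<theta>hat i - W j))\<^sup>2"
        unfolding tm_def vm_def by (rule norm_mid)
      have "\<gamma> i / 2 * (norm (tm i - vm j))\<^sup>2 \<le> \<gamma> i / 2 * (1/2 * (norm (\<theta>' i - w j))\<^sup>2 + 1/2 * (norm (\<theta>hat i - W j))\<^sup>2)"
        using hn gamma_pos[OF \<open>i < n\<close>] by (intro mult_left_mono) auto
      then show "f i (tm i) + \<gamma> i / 2 * (norm (tm i - vm j))\<^sup>2 \<le> 1/2 * (f i (\<theta>' i) + \<gamma> i / 2 * (norm (\<theta>' i - w j))\<^sup>2)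
          + 1/2 * (f i (\<theta>hat i) + \<gamma> i / 2 * (norm (\<theta>hat i - W j))\<^sup>2) - \<mu>/8 * (norm (\<theta>' i - \<theta>hat i))\<^sup>2"
        using hf by (simp add: algebra_simps)
    next
      fix j assume j: "j \<in> {..<k}"
      have hn: "(norm (vm j - bm))\<^sup>2 \<le> 1/2 * (norm (w j - wbar))\<^sup>2 + 1/2 * (norm (W j - B))\<^sup>2"
        unfolding vm_def bm_def by (rule norm_mid)
      have "lam j / 2 * (norm (vm j - bm))\<^sup>2 \<le> lam j / 2 * (1/2 * (norm (w j - wbar))\<^sup>2 + 1/2 * (norm (W j - B))\<^sup>2)"
        using hn lambda_nonneg[of j] j by (intro mult_left_mono) auto
      then show "lam j / 2 * (norm (vm j - bm))\<^sup>2 \<le> 1/2 * (lam j / 2 * (norm (w j - wbar))\<^sup>2) + 1/2 * (lam j / 2 * (norm (W j - B))\<^sup>2)"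
        by (simp add: algebra_simps)
    qed
    also have "\<dots> = 1/2 * F_MTL k I f lam \<gamma> \<theta>' w wbar + 1/2 * F_MTL k I f lam \<gamma> \<theta>hat W B - D"
      unfolding F_MTL_def D_def
      by (rule sum_rearr[where a="\<lambda>j i. f i (\<theta>' i) + \<gamma> i / 2 * (norm (\<theta>' i - w j))\<^sup>2"
            and b="\<lambda>j i. f i (\<theta>hat i) + \<gamma> i / 2 * (norm (\<theta>hat i - W j))\<^sup>2"
            and c="\<lambda>j i. \<mu>/8 * (norm (\<theta>' i - \<theta>hat i))\<^sup>2"
            and x="\<lambda>j. lam j / 2 * (norm (w j - wbar))\<^sup>2" and y="\<lambda>j. lam j / 2 * (norm (W j - B))\<^sup>2"])
    finally show ?thesis .
  qed
  have D0: "D \<le> 0" using conv eq MTL_min[of tm vm bm] by linarith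
  have inn: "\<And>j. j \<in> {..<k} \<Longrightarrow> 0 \<le> (\<Sum>i\<in>I j. \<mu>/8 * (norm (\<theta>' i - \<theta>hat i))\<^sup>2)"
    using mu_pos by (intro sum_nonneg) auto
  have "D = 0" using D0 inn unfolding D_def by (meson order_antisym sum_nonneg)
  then have Z: "\<forall>j\<in>{..<k}. (\<Sum>i\<in>I j. \<mu>/8 * (norm (\<theta>' i - \<theta>hat i))\<^sup>2) = 0"
    unfolding D_def using sum_nonneg_eq_0_iff[of "{..<k}", OF _ inn] by simp
  show ?thesis
  proof (intro allI impI)
    fix i assume "i < n"
    then obtain j where j: "j < k" "i \<in> I j" using clusters_cover by blast
    have "\<forall>i\<in>I j. \<mu>/8 * (norm (\<theta>' i - \<theta>hat i))\<^sup>2 = 0"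
      using Z j sum_nonneg_eq_0_iff[OF fin[OF j(1)], of "\<lambda>i. \<mu>/8 * (norm (\<theta>' i - \<theta>hat i))\<^sup>2"] mu_pos by simp
    then show "\<theta>hat i = \<theta>' i" using j mu_pos by simp
  qed
qed

end
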